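(* For all integers $n\ge 2$ and $d$, the $(n-1)\times(n-1)$ matrix $B(n,d)=\bigl(b_{n,d}(i,j)\bigr)_{i,j=1}^{n-1}$ is Toeplitz, i.e. $b_{n,d}(i+1,j+1)=b_{n,d}(i,j)$ for all $i,j\in[n-2]$.
   Context: For a permutation $\pi=\pi_1\cdots\pi_n$ of $[n]$ (one-line notation) or any word of distinct integers, an ascent is a position $t$ with $\pi_t<\pi_{t+1}$ and a descent one with $\pi_t>\pi_{t+1}$; $\operatorname{des}(\pi)$ is the number of descents and the height $h$ of a word is its number of ascents minus its number of descents. $\pi$ is a ballot permutation if every prefix $\pi_1\cdots\pi_t$ ($t\in[n]$) has nonnegative height. $\mathscr{B}_{n,d}$ is the set of ballot permutations of $[n]$ with exactly $d$ descents, and $b_{n,d}(i,j)$ is the number of $\pi\in\mathscr{B}_{n,d}$ that contain $i\,n\,j$ as a factor (consecutive letters $\pi_t=i,\pi_{t+1}=n,\pi_{t+2}=j$ for some $t$). *)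

theory Defs
  imports Main
begin

(* Words of distinct integers are represented as lists of naturals (permutations of [n] = {1..n}).
   Positions are 0-based in Isabelle lists. *)

definition ascents :: "nat list \<Rightarrow> nat" where
  "ascents w = card {t. Suc t < length w \<and> w ! t < w ! Suc t}"

definition descents :: "nat list \<Rightarrow> nat" where
  "descents w = card {t. Suc t < length w \<and> w ! t > w ! Suc t}"

definition height :: "nat list \<Rightarrow> int" where
  "height w = int (ascents w) - int (descents w)"

definition is_perm :: "nat \<Rightarrow> nat list \<Rightarrow> bool" where
  "is_perm n w \<longleftrightarrow> distinct w \<and> set w = {1..n}"

definition ballot :: "nat list \<Rightarrow> bool" where
  "ballot w \<longleftrightarrow> (\<forall>t\<in>{1..length w}. height (take t w) \<ge> 0)"

definition ballot_perms :: "nat \<Rightarrow> int \<Rightarrow> nat list set" where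
  "ballot_perms n d = {w. is_perm n w \<and> ballot w \<and> int (descents w) = d}"

definition has_factor3 :: "nat list \<Rightarrow> nat \<Rightarrow> nat \<Rightarrow> nat \<Rightarrow> bool" where
  "has_factor3 w a b c \<longleftrightarrow>
     (\<exists>t. Suc (Suc t) < length w \<and> w ! t = a \<and> w ! Suc t = b \<and> w ! Suc (Suc t) = c)"

definition b_count :: "nat \<Rightarrow> int \<Rightarrow> nat \<Rightarrow> nat \<Rightarrow> nat" where
  "b_count n d i j = card {w \<in> ballot_perms n d. has_factor3 w i n j}"

end

theory Submission
  imports Defs
begin

definition st :: "nat \<Rightarrow> nat \<Rightarrow> int" where
  "st a b = (if a < b then 1 else if b < a then -1 else 0)"

fun hgt :: "nat list \<Rightarrow> int" where
  "hgt [] = 0" | "hgt [x] = 0" | "hgt (x#y#xs) = st x y + hgt (y#xs)"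

fun dn :: "nat list \<Rightarrow> nat" where
  "dn [] = 0" | "dn [x] = 0" | "dn (x#y#xs) = (if y < x then 1 else 0) + dn (y#xs)"

fun pb :: "int \<Rightarrow> nat list \<Rightarrow> bool" where
  "pb c [] = True" | "pb c [x] = (0 \<le> c)" | "pb c (x#y#xs) = (0 \<le> c \<and> pb (c + st x y) (y#xs))"

lemma card_nat_split:
  assumes "finite {t. Q t}"
  shows "card {t::nat. Q t} = (if Q 0 then 1 else 0) + card {t. Q (Suc t)}"
proof -
  let ?Z = "(if Q 0 then {0::nat} else {})"
  have e: "{t. Q t} = ?Z \<union> Suc ` {t. Q (Suc t)}"
    by (rule set_eqI, case_tac x, auto)
  have f: "finite (Suc ` {t. Q (Suc t)})" using assms e by (metis finite_Un)
  have "card {t. Q t} = card ?Z + card (Suc ` {t. Q (Suc t)})"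
    unfolding e
    apply (rule card_Un_disjoint)
    using f apply auto
    done
  moreover have "card (Suc ` {t. Q (Suc t)}) = card {t. Q (Suc t)}" by (rule card_image) simp
  ultimately show ?thesis by simp
qed

lemma fin_idx: "finite {t. Suc t < length w \<and> P t}"
  by (rule finite_subset[of _ "{..<length w}"]) auto

lemma asc_simps: "ascents [] = 0" "ascents [x] = 0"
  "ascents (x#y#xs) = (if x < y then 1 else 0) + ascents (y#xs)"
  unfolding ascents_def
  by (subst card_nat_split[OF fin_idx]; simp)+

lemma desc_simps: "descents [] = 0" "descents [x] = 0"
  "descents (x#y#xs) = (if y < x then 1 else 0) + descents (y#xs)"
  unfolding descents_def
  by (subst card_nat_split[OF fin_idx]; simp)+

lemma descents_dn: "descents w = dn w"
  by (induction w rule: dn.induct) (simp_all add: desc_simps)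

lemma height_hgt: "height w = hgt w"
proof (induction w rule: hgt.induct)
  case (3 x y xs)
  then show ?case unfolding height_def by (simp add: asc_simps desc_simps st_def)
qed (simp_all add: height_def asc_simps desc_simps)

lemma ball_Suc: "(\<forall>t\<in>{1..Suc m}. P t) \<longleftrightarrow> P 1 \<and> (\<forall>t\<in>{1..m}. P (Suc t))"
  apply auto
  apply (case_tac "t = 1", simp)
  apply (drule_tac x="t - 1" in bspec, auto)
  done

lemma pb_iff: "pb c w \<longleftrightarrow> (\<forall>t\<in>{1..length w}. 0 \<le> c + hgt (take t w))"
proof (induction c w rule: pb.induct)
  case (3 c x y xs)
  have "(\<forall>t\<in>{1..length (x#y#xs)}. 0 \<le> c + hgt (take t (x#y#xs))) \<longleftrightarrow>
        0 \<le> c \<and> (\<forall>t\<in>{1..length (y#xs)}. 0 \<le> c + hgt (take (Suc t) (x#y#xs)))"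
    by (subst length_Cons, subst ball_Suc) simp
  also have "\<dots> \<longleftrightarrow> 0 \<le> c \<and> (\<forall>t\<in>{1..length (y#xs)}. 0 \<le> c + st x y + hgt (take t (y#xs)))"
  proof -
    have "\<And>t. t \<in> {1..length (y#xs)} \<Longrightarrow> hgt (take (Suc t) (x#y#xs)) = st x y + hgt (take t (y#xs))"
      by (case_tac t) auto
    then show ?thesis by (auto simp: add.assoc)
  qed
  finally show ?case using 3 by simp
qed auto

lemma ballot_pb: "ballot w \<longleftrightarrow> pb 0 w"
  unfolding ballot_def pb_iff by (simp add: height_hgt)

lemma hgt_append: "hgt (xs @ y # ys) = hgt (xs @ [y]) + hgt (y # ys)"
proof (induction xs)
  case (Cons x xs)
  then show ?case by (cases xs) auto
qed simp

lemma hgt_snoc: "xs \<noteq> [] \<Longrightarrow> hgt (xs @ [y]) = hgt xs + st (last xs) y"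
proof (induction xs)
  case (Cons x xs)
  then show ?case by (cases xs) auto
qed simp

lemma dn_append: "dn (xs @ y # ys) = dn (xs @ [y]) + dn (y # ys)"
proof (induction xs)
  case (Cons x xs)
  then show ?case by (cases xs) auto
qed simp

lemma dn_snoc: "xs \<noteq> [] \<Longrightarrow> dn (xs @ [y]) = dn xs + (if y < last xs then 1 else 0)"
proof (induction xs)
  case (Cons x xs)
  then show ?case by (cases xs) auto
qed simp

lemma pb_append: "pb c (xs @ y # ys) \<longleftrightarrow> pb c (xs @ [y]) \<and> pb (c + hgt (xs @ [y])) (y # ys)"
proof (induction xs arbitrary: c)
  case Nil
  then show ?case by (cases ys) auto
next
  case (Cons x xs)
  then show ?case by (cases xs) (auto simp: add.assoc)
qed

lemma pb_snoc: "xs \<noteq> [] \<Longrightarrow> pb c (xs @ [y]) \<longleftrightarrow> pb c xs \<and> 0 \<le> c + hgt xs + st (last xs) y"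
proof (induction xs arbitrary: c)
  case (Cons x xs)
  then show ?case by (cases xs) (auto simp: add.assoc)
qed simp

lemma pb_hgt: "pb c w \<Longrightarrow> w \<noteq> [] \<Longrightarrow> 0 \<le> c + hgt w"
  by (induction c w rule: pb.induct) (auto simp: add.assoc)

lemma pb_prefix: "pb c (xs @ ys) \<Longrightarrow> pb c xs"
proof (induction xs arbitrary: c)
  case (Cons x xs)
  then show ?case by (cases xs; cases ys) auto
qed simp

lemma pb_mono: "pb c w \<Longrightarrow> c \<le> c' \<Longrightarrow> pb c' w"
  by (induction c w arbitrary: c' rule: pb.induct) auto

lemma pb_cons_ge0: "pb c (x # xs) \<Longrightarrow> 0 \<le> c"
  by (cases xs) auto

lemma st_bounds: "-1 \<le> st a b" "st a b \<le> 1"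
  by (auto simp: st_def)

definition smono :: "(nat \<Rightarrow> nat) \<Rightarrow> nat set \<Rightarrow> bool" where
  "smono f S \<longleftrightarrow> (\<forall>x\<in>S. \<forall>y\<in>S. x < y \<longrightarrow> f x < f y)"

lemma lt_map: "smono f S \<Longrightarrow> x \<in> S \<Longrightarrow> y \<in> S \<Longrightarrow> (f x < f y) = (x < y)"
  unfolding smono_def
  by (metis linorder_neqE_nat order_less_asym)

lemma st_map: "smono f S \<Longrightarrow> x \<in> S \<Longrightarrow> y \<in> S \<Longrightarrow> st (f x) (f y) = st x y"
  using lt_map[of f S x y] lt_map[of f S y x] unfolding st_def by auto

lemma hgt_map: "smono f S \<Longrightarrow> set w \<subseteq> S \<Longrightarrow> hgt (map f w) = hgt w"
  by (induction w rule: hgt.induct) (auto simp: st_map)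

lemma dn_map: "smono f S \<Longrightarrow> set w \<subseteq> S \<Longrightarrow> dn (map f w) = dn w"
  by (induction w rule: dn.induct) (auto simp: lt_map)

lemma pb_map: "smono f S \<Longrightarrow> set w \<subseteq> S \<Longrightarrow> pb c (map f w) = pb c w"
  by (induction c w rule: pb.induct) (auto simp: st_map)

lemma fac_iff: "has_factor3 w a b c \<longleftrightarrow> (\<exists>xs ys. w = xs @ a # b # c # ys)"
proof
  assume "has_factor3 w a b c"
  then obtain t where t: "Suc (Suc t) < length w" "w ! t = a" "w ! Suc t = b" "w ! Suc (Suc t) = c"
    unfolding has_factor3_def by blast
  have "w = take t w @ drop t w" by simp
  also have "drop t w = a # b # c # drop (Suc (Suc (Suc t))) w"
    using t by (metis Cons_nth_drop_Suc Suc_lessD)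
  finally show "\<exists>xs ys. w = xs @ a # b # c # ys" by blast
next
  assume "\<exists>xs ys. w = xs @ a # b # c # ys"
  then obtain xs ys where "w = xs @ a # b # c # ys" by blast
  then show "has_factor3 w a b c" unfolding has_factor3_def
    by (intro exI[of _ "length xs"]) (auto simp: nth_append)
qed

lemma fac_map: "has_factor3 w a b c \<Longrightarrow> has_factor3 (map f w) (f a) (f b) (f c)"
  unfolding fac_iff by force

lemma fac_appendL: "has_factor3 xs a b c \<Longrightarrow> has_factor3 (xs @ ys) a b c"
  unfolding fac_iff by force

lemma fac_appendR: "has_factor3 ys a b c \<Longrightarrow> has_factor3 (xs @ ys) a b c"
  unfolding fac_iff by (metis append.assoc)

lemma fac_Cons: "has_factor3 ys a b c \<Longrightarrow> has_factor3 (x # ys) a b c"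
  using fac_appendR[of ys a b c "[x]"] by simp

lemma fac_Cons_inv: "has_factor3 (x # ys) a b c \<Longrightarrow> x \<noteq> a \<Longrightarrow> has_factor3 ys a b c"
  unfolding fac_iff by (auto simp: Cons_eq_append_conv)

lemma fac_append_cases:
  assumes "has_factor3 (xs @ ys) a b c"
  shows "has_factor3 xs a b c \<or> has_factor3 ys a b c \<or>
         (\<exists>L R. xs = L @ [a] \<and> ys = b # c # R) \<or> (\<exists>L R. xs = L @ [a, b] \<and> ys = c # R)"
proof -
  obtain P Q where e: "xs @ ys = P @ a # b # c # Q" using assms unfolding fac_iff by blast
  then obtain us where "(xs = P @ us \<and> us @ ys = a # b # c # Q) \<or> (xs @ us = P \<and> ys = us @ a # b # c # Q)"
    by (auto simp: append_eq_append_conv2)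
  then show ?thesis
  proof
    assume h: "xs = P @ us \<and> us @ ys = a # b # c # Q"
    show ?thesis
    proof (cases us)
      case Nil
      then have "ys = [] @ a # b # c # Q" using h by simp
      then have "has_factor3 ys a b c" unfolding fac_iff by blast
      then show ?thesis by blast
    next
      case (Cons u1 us1)
      show ?thesis
      proof (cases us1)
        case Nil then show ?thesis using h Cons by auto
      next
        case (Cons u2 us2)
        show ?thesis
        proof (cases us2)
          case Nil then show ?thesis using h Cons \<open>us = u1 # us1\<close> by auto
        next
          case (Cons u3 us3)
          then have "xs = P @ a # b # c # (us3 @ ys) \<or> True" by simp
          have "xs = P @ a # b # c # us3" using h Cons \<open>us = u1 # us1\<close> \<open>us1 = u2 # us2\<close> by auto
          then show ?thesis unfolding fac_iff by blast
        qed
      qed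
    qed
  next
    assume "xs @ us = P \<and> ys = us @ a # b # c # Q"
    then show ?thesis unfolding fac_iff by blast
  qed
qed

definition gg :: "nat \<Rightarrow> nat \<Rightarrow> nat" where "gg n x = (if x = n then n else Suc x)"
definition hh :: "nat \<Rightarrow> nat \<Rightarrow> nat" where "hh n x = (if x = n then n else x - 1)"
definition D1 :: "nat \<Rightarrow> nat set" where "D1 n = {1..n} - {n - 1}"
definition D2 :: "nat \<Rightarrow> nat set" where "D2 n = {1..n} - {1}"

lemma smono_gg: "3 \<le> n \<Longrightarrow> smono (gg n) (D1 n)"
proof (unfold smono_def, intro ballI impI)
  fix x y assume "3 \<le> n" "x \<in> D1 n" "y \<in> D1 n" "x < y"
  then show "gg n x < gg n y" unfolding gg_def D1_def by (cases "y = n") auto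
qed

lemma smono_hh: "3 \<le> n \<Longrightarrow> smono (hh n) (D2 n)"
proof (unfold smono_def, intro ballI impI)
  fix x y assume "3 \<le> n" "x \<in> D2 n" "y \<in> D2 n" "x < y"
  then show "hh n x < hh n y" unfolding hh_def D2_def by (cases "y = n") auto
qed

lemma gg_D: "3 \<le> n \<Longrightarrow> x \<in> D1 n \<Longrightarrow> gg n x \<in> D2 n \<and> hh n (gg n x) = x"
  unfolding gg_def hh_def D1_def D2_def by auto

lemma hh_D: "3 \<le> n \<Longrightarrow> x \<in> D2 n \<Longrightarrow> hh n x \<in> D1 n \<and> gg n (hh n x) = x"
  unfolding gg_def hh_def D1_def D2_def by auto

lemma inj_gg: "3 \<le> n \<Longrightarrow> inj_on (gg n) (D1 n)"
  by (metis gg_D inj_on_inverseI)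

lemma inj_hh: "3 \<le> n \<Longrightarrow> inj_on (hh n) (D2 n)"
  by (metis hh_D inj_on_inverseI)

lemma gg_img: "3 \<le> n \<Longrightarrow> gg n ` D1 n = D2 n"
  using gg_D hh_D by (auto intro!: image_eqI)

lemma hh_img: "3 \<le> n \<Longrightarrow> hh n ` D2 n = D1 n"
  using gg_D hh_D by (auto intro!: image_eqI)

lemma gg_val: "i \<in> {1..n-2} \<Longrightarrow> gg n i = i + 1" "gg n n = n"
  unfolding gg_def by auto

lemma hh_val: "i \<in> {1..n-2} \<Longrightarrow> hh n (i+1) = i" "hh n n = n"
  unfolding hh_def by auto

lemma hgt_cat: "xs \<noteq> [] \<Longrightarrow> ys \<noteq> [] \<Longrightarrow> hgt (xs @ ys) = hgt xs + st (last xs) (hd ys) + hgt ys"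
proof (induction xs)
  case (Cons x xs)
  then show ?case by (cases xs; cases ys) auto
qed simp

lemma dn_cat: "xs \<noteq> [] \<Longrightarrow> ys \<noteq> [] \<Longrightarrow> dn (xs @ ys) = dn xs + (if hd ys < last xs then 1 else 0) + dn ys"
proof (induction xs)
  case (Cons x xs)
  then show ?case by (cases xs; cases ys) auto
qed simp

lemma pb_cat: "xs \<noteq> [] \<Longrightarrow> ys \<noteq> [] \<Longrightarrow> pb c (xs @ ys) \<longleftrightarrow> pb c xs \<and> pb (c + hgt xs + st (last xs) (hd ys)) ys"
proof (induction xs arbitrary: c)
  case (Cons x xs)
  then show ?case by (cases xs; cases ys) (auto simp: add.assoc dest: pb_cons_ge0)
qed simp

lemma hgt_single: "hgt [x] = 0" by simp
lemma st_up: "a < b \<Longrightarrow> st a b = 1" unfolding st_def by simp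
lemma st_down: "b < a \<Longrightarrow> st a b = -1" unfolding st_def by simp

lemma last_map': "xs \<noteq> [] \<Longrightarrow> last (map f xs) = f (last xs)" by (simp add: last_map)
lemma hd_map': "xs \<noteq> [] \<Longrightarrow> hd (map f xs) = f (hd xs)" by (simp add: hd_map)

lemma perm_len: "is_perm n w \<Longrightarrow> length w = n"
  unfolding is_perm_def by (metis card_atLeastAtMost diff_Suc_1 distinct_card)

lemma decompA:
  assumes n3: "3 \<le> n" and ij: "i \<in> {1..n-2}" "j \<in> {1..n-2}"
    and P: "is_perm n w" and B: "pb 0 w" and F: "has_factor3 w i n j"
  obtains a b where "w = a @ (n-1) # b" "a \<noteq> []" "set a \<subseteq> D1 n" "set b \<subseteq> D1 n"
    "last a < n - 1" "b \<noteq> [] \<Longrightarrow> hd b < n - 1"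
    "has_factor3 a i n j \<or> has_factor3 b i n j"
proof -
  have "n - 1 \<in> set w" using P n3 unfolding is_perm_def by auto
  then obtain a b where w: "w = a @ (n-1) # b" by (meson split_list)
  have dist: "distinct w" and sw: "set w = {1..n}" using P unfolding is_perm_def by auto
  have na: "n - 1 \<notin> set a" and nb: "n - 1 \<notin> set b" using dist w by auto
  have sa: "set a \<subseteq> D1 n" and sb: "set b \<subseteq> D1 n" using sw na nb w unfolding D1_def by auto
  have fab: "has_factor3 a i n j \<or> has_factor3 b i n j"
  proof -
    have hf: "has_factor3 (a @ ((n-1) # b)) i n j" using F w by simp
    show ?thesis
    proof -
      have ni: "n - 1 \<noteq> i" "n - 1 \<noteq> j" "n - 1 \<noteq> n" using ij n3 by auto
      from fac_append_cases[OF hf] show ?thesis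
        using ni fac_Cons_inv[of "n-1" b i n j] by auto
    qed
  qed
  have lastn: "a \<noteq> [] \<Longrightarrow> last a \<noteq> n"
  proof
    assume ne: "a \<noteq> []" and l: "last a = n"
    from fab show False
    proof
      assume "has_factor3 a i n j"
      then obtain L R where a: "a = L @ i # n # j # R" unfolding fac_iff by blast
      have "last a = last (j # R)" unfolding a by simp
      then have "last a \<in> set (j # R)" using last_in_set by (metis list.distinct(1))
      moreover have "n \<notin> set (j # R)" using dist w a by auto
      ultimately show False using l by simp
    next
      assume "has_factor3 b i n j"
      then have "n \<in> set b" unfolding fac_iff by auto
      moreover have "n \<in> set a" using l ne last_in_set by metis
      ultimately show False using dist w by auto
    qed
  qed
  have hdn: "b \<noteq> [] \<Longrightarrow> hd b \<noteq> n"
  proof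
    assume ne: "b \<noteq> []" and l: "hd b = n"
    from fab show False
    proof
      assume "has_factor3 b i n j"
      then obtain L R where bb: "b = L @ i # n # j # R" unfolding fac_iff by blast
      show False
      proof (cases L)
        case Nil then show ?thesis using l bb ij by auto
      next
        case (Cons l1 L1)
        then have "n \<in> set L" using l bb by auto
        then show False using dist w bb by auto
      qed
    next
      assume "has_factor3 a i n j"
      then have "n \<in> set a" unfolding fac_iff by auto
      moreover have "n \<in> set b" using l ne hd_in_set by metis
      ultimately show False using dist w by auto
    qed
  qed
  have hdlt: "b \<noteq> [] \<Longrightarrow> hd b < n - 1"
  proof -
    assume "b \<noteq> []"
    then have "hd b \<in> D1 n" "hd b \<noteq> n" using sb hdn hd_in_set by auto
    then show ?thesis unfolding D1_def by auto
  qed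
  have ane: "a \<noteq> []"
  proof
    assume a0: "a = []"
    have "length w = n" using perm_len P .
    then have "b \<noteq> []" using w a0 n3 by auto
    then obtain x b' where b: "b = x # b'" by (cases b) auto
    have "x < n - 1" using hdlt b by simp
    then have "pb (-1) (x # b')" using B w a0 b by (simp add: st_down)
    then show False using pb_cons_ge0 by fastforce
  qed
  have lastlt: "last a < n - 1"
  proof -
    have "last a \<in> D1 n" "last a \<noteq> n" using sa lastn ane last_in_set by auto
    then show ?thesis unfolding D1_def by auto
  qed
  show ?thesis using that w ane sa sb lastlt hdlt fab by blast
qed

lemma peak_facts:
  assumes "a \<noteq> []" "last a < m" "b \<noteq> [] \<Longrightarrow> hd b < m"
  shows "pb c (a @ m # b) \<longleftrightarrow> pb c a \<and> 0 \<le> c + hgt a + 1 \<and> (b \<noteq> [] \<longrightarrow> pb (c + hgt a) b)"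
    and "dn (a @ m # b) = dn a + (if b = [] then 0 else 1 + dn b)"
proof -
  have e: "a @ m # b = a @ ([m] @ b)" by simp
  show "pb c (a @ m # b) \<longleftrightarrow> pb c a \<and> 0 \<le> c + hgt a + 1 \<and> (b \<noteq> [] \<longrightarrow> pb (c + hgt a) b)"
  proof (cases b)
    case Nil then show ?thesis using assms by (simp add: pb_snoc st_up)
  next
    case (Cons x b')
    then show ?thesis using assms
      by (subst e, subst pb_cat) (auto simp: pb_cat[of "[m]"] st_up st_down)
  qed
  show "dn (a @ m # b) = dn a + (if b = [] then 0 else 1 + dn b)"
  proof (cases b)
    case Nil then show ?thesis using assms by (simp add: dn_snoc)
  next
    case (Cons x b')
    then show ?thesis using assms
      by (subst e, subst dn_cat) (auto simp: dn_cat[of "[m]"])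
  qed
qed

lemma pb_Cons_ne: "ys \<noteq> [] \<Longrightarrow> pb c (y # ys) \<longleftrightarrow> 0 \<le> c \<and> pb (c + st y (hd ys)) ys"
  by (cases ys) auto
lemma dn_Cons_ne: "ys \<noteq> [] \<Longrightarrow> dn (y # ys) = (if hd ys < y then 1 else 0) + dn ys"
  by (cases ys) auto
lemma hgt_Cons_ne: "ys \<noteq> [] \<Longrightarrow> hgt (y # ys) = st y (hd ys) + hgt ys"
  by (cases ys) auto

definition PhiAB :: "nat \<Rightarrow> nat list \<Rightarrow> nat list \<Rightarrow> nat list" where
  "PhiAB n a b = (if b = [] then 1 # map (gg n) a
     else if 1 \<le> hgt a then map (gg n) a @ 1 # map (gg n) b
     else if hd b < last a then 1 # map (gg n) a @ map (gg n) b
     else map (gg n) a @ map (gg n) b @ [1])"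

lemma perm_fwd:
  assumes "is_perm n (a @ (n-1) # b)" "3 \<le> n"
  shows "distinct (map (gg n) a @ map (gg n) b) \<and> set (map (gg n) a) \<union> set (map (gg n) b) = D2 n"
proof -
  have d: "distinct (a @ b)" and s: "set (a @ b) = D1 n"
    using assms(1) unfolding is_perm_def D1_def by auto
  have "inj_on (gg n) (set (a @ b))" using inj_gg[OF assms(2)] s by simp
  then have D: "distinct (map (gg n) (a @ b))" using d distinct_map by blast
  have S: "set (map (gg n) (a @ b)) = D2 n" using gg_img[OF assms(2)] s by (metis list.set_map)
  show ?thesis using D S by (metis map_append set_append)
qed

lemma perm_shapes:
  assumes "distinct (X @ Y)" "set X \<union> set Y = D2 n" "3 \<le> n"
  shows "is_perm n (X @ 1 # Y)" "is_perm n (1 # X @ Y)" "is_perm n (X @ Y @ [1])"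
proof -
  have n1: "1 \<notin> set X" "1 \<notin> set Y" using assms(2) unfolding D2_def by auto
  have one: "(1::nat) \<in> {1..n}" using assms(3) by simp
  have s: "insert 1 (set X \<union> set Y) = {1..n}" unfolding assms(2) D2_def using insert_Diff[OF one] by simp
  have d: "distinct X" "distinct Y" "set X \<inter> set Y = {}" using assms(1) by auto
  show "is_perm n (X @ 1 # Y)" unfolding is_perm_def
  proof
    show "distinct (X @ 1 # Y)" using d n1 by simp
    show "set (X @ 1 # Y) = {1..n}" using s by simp
  qed
  show "is_perm n (1 # X @ Y)" unfolding is_perm_def
  proof
    show "distinct (1 # X @ Y)" using d n1 by simp
    show "set (1 # X @ Y) = {1..n}" using s by simp
  qed
  show "is_perm n (X @ Y @ [1])" unfolding is_perm_def
  proof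
    show "distinct (X @ Y @ [1])" using d n1 by simp
    show "set (X @ Y @ [1]) = {1..n}" using s by auto
  qed
qed

lemma D2_gt1: "x \<in> D2 n \<Longrightarrow> 1 < x" unfolding D2_def by auto

lemma fwd:
  assumes n3: "3 \<le> n" and ij: "i \<in> {1..n-2}" "j \<in> {1..n-2}"
    and w: "w = a @ (n-1) # b" and ane: "a \<noteq> []" and sa: "set a \<subseteq> D1 n" and sb: "set b \<subseteq> D1 n"
    and la: "last a < n - 1" and hb: "b \<noteq> [] \<Longrightarrow> hd b < n - 1"
    and F: "has_factor3 a i n j \<or> has_factor3 b i n j"
    and P: "is_perm n w" and B: "pb 0 w"
  shows "is_perm n (PhiAB n a b) \<and> pb 0 (PhiAB n a b) \<and> dn (PhiAB n a b) = dn w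
         \<and> has_factor3 (PhiAB n a b) (i+1) n (j+1)"
proof -
  let ?g = "gg n"
  define A' where "A' = map ?g a"
  define B' where "B' = map ?g b"
  have sm: "smono ?g (D1 n)" using smono_gg[OF n3] .
  have hA: "hgt A' = hgt a" "\<And>c. pb c A' = pb c a" "dn A' = dn a"
    unfolding A'_def using sm sa by (auto simp: hgt_map pb_map dn_map)
  have hB: "hgt B' = hgt b" "\<And>c. pb c B' = pb c b" "dn B' = dn b"
    unfolding B'_def using sm sb by (auto simp: hgt_map pb_map dn_map)
  have A'ne: "A' \<noteq> []" using ane A'_def by simp
  have gt1: "\<And>x. x \<in> set A' \<union> set B' \<Longrightarrow> 1 < x"
  proof -
    fix x assume "x \<in> set A' \<union> set B'"
    then obtain y where "y \<in> set a \<union> set b" "x = gg n y" unfolding A'_def B'_def by auto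
    then have "x \<in> D2 n" using gg_D[OF n3] sa sb by auto
    then show "1 < x" by (rule D2_gt1)
  qed
  have lA: "1 < last A'" using gt1 A'ne last_in_set by blast
  have hA1: "1 < hd A'" using gt1 A'ne hd_in_set by blast
  have pf: "pb 0 w \<longleftrightarrow> pb 0 a \<and> 0 \<le> 0 + hgt a + 1 \<and> (b \<noteq> [] \<longrightarrow> pb (0 + hgt a) b)"
    "dn w = dn a + (if b = [] then 0 else 1 + dn b)"
    using peak_facts[OF ane la hb] w by auto
  have pa: "pb 0 a" and pbb: "b \<noteq> [] \<Longrightarrow> pb (hgt a) b" using B pf by auto
  have ha0: "0 \<le> hgt a" using pb_hgt[OF pa ane] by simp
  have perm: "distinct (A' @ B') \<and> set A' \<union> set B' = D2 n"
    using perm_fwd[OF _ n3] P w unfolding A'_def B'_def by simp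
  have fac': "has_factor3 A' (i+1) n (j+1) \<or> has_factor3 B' (i+1) n (j+1)"
    using F fac_map[of _ i n j ?g] gg_val(1)[OF ij(1)] gg_val(1)[OF ij(2)] gg_val(2)
    unfolding A'_def B'_def by metis
  have main: "pb 0 (PhiAB n a b) \<and> dn (PhiAB n a b) = dn w"
  proof (cases "b = []")
    case True
    then have e: "PhiAB n a b = [1] @ A'" unfolding PhiAB_def A'_def by simp
    have "pb 1 a" using pb_mono[OF pa] by simp
    then show ?thesis unfolding e using True hA A'ne hA1 pf
      by (simp add: pb_Cons_ne dn_Cons_ne hgt_Cons_ne pb_cat dn_cat st_up)
  next
    case bne: False
    have B'ne: "B' \<noteq> []" using bne B'_def by simp
    have hB1: "1 < hd B'" using gt1 B'ne hd_in_set by blast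
    have lB: "1 < last B'" using gt1 B'ne last_in_set by blast
    have pb': "pb (hgt a) b" using pbb bne by simp
    have hbD: "hd b \<in> D1 n" using sb bne hd_in_set by blast
    have laD: "last a \<in> D1 n" using sa ane last_in_set by blast
    have cmp: "(hd B' < last A') = (hd b < last a)"
      unfolding A'_def B'_def using ane bne lt_map[OF sm hbD laD]
      by (simp add: hd_map last_map)
    have stAB: "st (last A') (hd B') = st (last a) (hd b)"
      unfolding A'_def B'_def using ane bne st_map[OF sm laD hbD]
      by (simp add: hd_map last_map)
    show ?thesis
    proof (cases "1 \<le> hgt a")
      case True
      then have e: "PhiAB n a b = A' @ ([1] @ B')" unfolding PhiAB_def A'_def B'_def using bne by simp
      show ?thesis unfolding e using True hA hB A'ne B'ne hB1 lA pf pa pb' bne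
        by (simp add: pb_Cons_ne dn_Cons_ne hgt_Cons_ne pb_cat dn_cat st_up st_down)
    next
      case False
      then have h0: "hgt a = 0" using ha0 by simp
      show ?thesis
      proof (cases "hd b < last a")
        case True
        then have e: "PhiAB n a b = [1] @ (A' @ B')" unfolding PhiAB_def A'_def B'_def using bne False by simp
        have "pb 1 a" using pb_mono[OF pa] by simp
        moreover have "st (last a) (hd b) = -1" using True st_down by simp
        ultimately show ?thesis unfolding e using h0 hA hB A'ne B'ne hA1 pf pb' bne True stAB cmp
          by (simp add: pb_Cons_ne dn_Cons_ne hgt_Cons_ne pb_cat dn_cat st_up)
      next
        case False2: False
        have neq: "hd b \<noteq> last a"
        proof
          assume "hd b = last a"
          moreover have "distinct (a @ b)" using P w unfolding is_perm_def by simp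
          ultimately show False using ane bne last_in_set hd_in_set
            by (metis disjoint_iff distinct_append)
        qed
        then have up: "last a < hd b" using False2 by simp
        then have stu: "st (last a) (hd b) = 1" using st_up by simp
        have e: "PhiAB n a b = (A' @ B') @ [1]" unfolding PhiAB_def A'_def B'_def
          using bne \<open>\<not> 1 \<le> hgt a\<close> False2 by simp
        have hb0: "0 \<le> hgt b" using pb_hgt[OF pb'] h0 bne by simp
        have "pb 1 b" using pb_mono[OF pb'] h0 by simp
        moreover have "last (A' @ B') = last B'" using B'ne by simp
        ultimately show ?thesis unfolding e using h0 hA hB A'ne B'ne lB pf pb' bne stAB stu cmp False2 pa hb0
          by (simp add: pb_Cons_ne dn_Cons_ne hgt_Cons_ne pb_cat dn_cat hgt_cat st_down)
      qed
    qed
  qed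
  have isp: "is_perm n (PhiAB n a b)"
    using perm_shapes[of A' B' n] perm_shapes[of A' "[]" n] perm n3
    unfolding PhiAB_def A'_def B'_def by auto
  have fc: "has_factor3 (PhiAB n a b) (i+1) n (j+1)"
  proof -
    have fnil: "\<not> has_factor3 [] x y z" for x y z by (simp add: has_factor3_def)
    have "has_factor3 A' (i+1) n (j+1) \<or> (b \<noteq> [] \<and> has_factor3 B' (i+1) n (j+1))"
      using fac' fnil B'_def by auto
    then show ?thesis unfolding PhiAB_def A'_def[symmetric] B'_def[symmetric]
      by (auto intro: fac_appendL fac_appendR fac_Cons)
  qed
  show ?thesis using main isp fc by simp
qed

definition goodAB :: "nat \<Rightarrow> nat list \<Rightarrow> nat list \<Rightarrow> bool" where
  "goodAB n a b \<longleftrightarrow> a \<noteq> [] \<and> set a \<subseteq> D1 n \<and> set b \<subseteq> D1 n \<and> last a < n - 1 \<and>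
     (b \<noteq> [] \<longrightarrow> hd b < n - 1) \<and> is_perm n (a @ (n-1) # b) \<and> pb 0 (a @ (n-1) # b)"

lemma goodAB_facts:
  assumes "goodAB n a b"
  shows "pb 0 a" "0 \<le> hgt a" "b \<noteq> [] \<Longrightarrow> pb (hgt a) b" "distinct (a @ b)" "a \<noteq> []"
    "set a \<subseteq> D1 n" "set b \<subseteq> D1 n"
proof -
  have ane: "a \<noteq> []" and la: "last a < n - 1" and hb: "b \<noteq> [] \<Longrightarrow> hd b < n - 1"
    and B: "pb 0 (a @ (n-1) # b)" using assms unfolding goodAB_def by auto
  have pf: "pb 0 (a @ (n-1) # b) \<longleftrightarrow> pb 0 a \<and> 0 \<le> 0 + hgt a + 1 \<and> (b \<noteq> [] \<longrightarrow> pb (0 + hgt a) b)"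
    using peak_facts[OF ane la hb] by blast
  show "pb 0 a" using B pf by simp
  then show "0 \<le> hgt a" using pb_hgt ane by fastforce
  show "b \<noteq> [] \<Longrightarrow> pb (hgt a) b" using B pf by simp
  show "distinct (a @ b)" using assms unfolding goodAB_def is_perm_def by auto
  show "a \<noteq> []" "set a \<subseteq> D1 n" "set b \<subseteq> D1 n" using assms unfolding goodAB_def by auto
qed

lemma shape:
  assumes g: "goodAB n a b" and n3: "3 \<le> n"
  defines "s \<equiv> PhiAB n a b"
  shows "b \<noteq> [] \<and> 1 \<le> hgt a \<Longrightarrow> hd s \<noteq> 1 \<and> last s \<noteq> 1"
    and "b = [] \<Longrightarrow> hd s = 1 \<and> pb 0 (tl s)"
    and "b \<noteq> [] \<and> \<not> 1 \<le> hgt a \<and> hd b < last a \<Longrightarrow> hd s = 1 \<and> \<not> pb 0 (tl s)"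
    and "b \<noteq> [] \<and> \<not> 1 \<le> hgt a \<and> \<not> hd b < last a \<Longrightarrow> hd s \<noteq> 1 \<and> last s = 1"
proof -
  note f = goodAB_facts[OF g]
  let ?g = "gg n"
  define A' where "A' = map ?g a"
  define B' where "B' = map ?g b"
  have sm: "smono ?g (D1 n)" using smono_gg[OF n3] .
  have A'ne: "A' \<noteq> []" using f A'_def by simp
  have gt1: "\<And>x. x \<in> set A' \<union> set B' \<Longrightarrow> 1 < x"
  proof -
    fix x assume "x \<in> set A' \<union> set B'"
    then obtain y where "y \<in> set a \<union> set b" "x = gg n y" unfolding A'_def B'_def by auto
    then have "x \<in> D2 n" using gg_D[OF n3] f by auto
    then show "1 < x" by (rule D2_gt1)
  qed
  have lA: "last A' \<noteq> 1" using gt1 A'ne last_in_set by fastforce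
  have hA1: "hd A' \<noteq> 1" using gt1 A'ne hd_in_set by fastforce
  show "b \<noteq> [] \<and> 1 \<le> hgt a \<Longrightarrow> hd s \<noteq> 1 \<and> last s \<noteq> 1"
  proof -
    assume h: "b \<noteq> [] \<and> 1 \<le> hgt a"
    then have B'ne: "B' \<noteq> []" using B'_def by simp
    have "last B' \<noteq> 1" using gt1 B'ne last_in_set by fastforce
    then show ?thesis using h A'ne B'ne hA1 unfolding s_def PhiAB_def A'_def[symmetric] B'_def[symmetric]
      by (simp add: hd_append)
  qed
  show "b = [] \<Longrightarrow> hd s = 1 \<and> pb 0 (tl s)"
    using f sm unfolding s_def PhiAB_def by (simp add: pb_map)
  show "b \<noteq> [] \<and> \<not> 1 \<le> hgt a \<and> hd b < last a \<Longrightarrow> hd s = 1 \<and> \<not> pb 0 (tl s)"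
  proof -
    assume h: "b \<noteq> [] \<and> \<not> 1 \<le> hgt a \<and> hd b < last a"
    then have B'ne: "B' \<noteq> []" using B'_def by simp
    have h0: "hgt A' = 0" using h f sm unfolding A'_def by (simp add: hgt_map)
    have hbD: "hd b \<in> D1 n" using f(7) h hd_in_set by blast
    have laD: "last a \<in> D1 n" using f(6) f(5) last_in_set by blast
    have "st (last A') (hd B') = -1"
      unfolding A'_def B'_def using f(5) h st_map[OF sm laD hbD] by (simp add: hd_map last_map st_down)
    then have "pb 0 (A' @ B') \<longleftrightarrow> pb 0 A' \<and> pb (-1) B'" using A'ne B'ne h0 by (simp add: pb_cat)
    moreover have "\<not> pb (-1) B'" using B'ne pb_cons_ge0 by (cases B') fastforce+
    ultimately have "\<not> pb 0 (A' @ B')" by simp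
    then show ?thesis using h unfolding s_def PhiAB_def A'_def B'_def by simp
  qed
  show "b \<noteq> [] \<and> \<not> 1 \<le> hgt a \<and> \<not> hd b < last a \<Longrightarrow> hd s \<noteq> 1 \<and> last s = 1"
    using hA1 A'ne unfolding s_def PhiAB_def A'_def[symmetric] B'_def[symmetric]
    by (simp add: hd_append)
qed

lemma app_unique: "xs1 @ y # ys1 = xs2 @ y # ys2 \<Longrightarrow> y \<notin> set xs1 \<Longrightarrow> y \<notin> set xs2 \<Longrightarrow> xs1 = xs2 \<and> ys1 = ys2"
proof (induction xs1 arbitrary: xs2)
  case Nil then show ?case by (cases xs2) auto
next
  case (Cons x xs1) then show ?case by (cases xs2) auto
qed

lemma prefix_longer:
  assumes "X1 @ Y1 = X2 @ Y2" "length X1 < length X2"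
  obtains Z where "X2 = X1 @ Z" "Z \<noteq> []" "\<exists>R. Y1 = Z @ R"
proof -
  from assms(1) obtain us where "(X1 = X2 @ us \<and> us @ Y1 = Y2) \<or> (X1 @ us = X2 \<and> Y1 = us @ Y2)"
    by (auto simp: append_eq_append_conv2)
  then have "X1 @ us = X2 \<and> Y1 = us @ Y2" using assms(2) by auto
  then show ?thesis using that assms(2) by auto
qed

lemma uniq_down:
  assumes "X1 @ Y1 = X2 @ Y2" "X1 \<noteq> []" "Y1 \<noteq> []" "hgt X1 = 0" "hd Y1 < last X1" "pb 0 X2"
    "length X1 < length X2"
  shows False
proof -
  obtain Z R where Z: "X2 = X1 @ Z" "Z \<noteq> []" "Y1 = Z @ R" using prefix_longer[OF assms(1,7)] by blast
  have "hd Z = hd Y1" using Z by simp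
  then have "pb 0 (X1 @ [hd Y1])" using assms(6) Z pb_prefix[of 0 "X1 @ [hd Z]" "tl Z"]
    by (metis append.assoc append_Cons append_Nil list.collapse)
  then show False using assms(2,4,5) by (simp add: pb_snoc st_down)
qed

lemma uniq_up:
  assumes "X1 @ Y1 = X2 @ Y2" "X1 \<noteq> []" "Y1 \<noteq> []" "hgt X1 = 0" "last X1 < hd Y1" "pb 0 Y1"
    "hgt X2 = 0" "length X1 < length X2"
  shows False
proof -
  obtain Z R where Z: "X2 = X1 @ Z" "Z \<noteq> []" "Y1 = Z @ R" using prefix_longer[OF assms(1,8)] by blast
  have hz: "hd Z = hd Y1" using Z(2,3) by simp
  have pz: "pb 0 Z" using pb_prefix[of 0 Z R] assms(6) Z(3) by simp
  have z0: "0 \<le> hgt Z" using pb_hgt[OF pz Z(2)] by simp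
  have "hgt X2 = hgt X1 + st (last X1) (hd Z) + hgt Z" using hgt_cat[OF assms(2) Z(2)] Z(1) by simp
  also have "st (last X1) (hd Z) = 1" using hz assms(5) st_up by simp
  finally show False using assms(4,7) z0 by simp
qed

lemma map_inj_D1:
  assumes "3 \<le> n" "map (gg n) xs = map (gg n) ys" "set xs \<subseteq> D1 n" "set ys \<subseteq> D1 n"
  shows "xs = ys"
proof -
  have "set xs \<union> set ys \<subseteq> D1 n" using assms(3,4) by simp
  then have "inj_on (gg n) (set xs \<union> set ys)" by (rule inj_on_subset[OF inj_gg[OF assms(1)]])
  then show ?thesis by (rule map_inj_on[OF assms(2)])
qed

lemma inj_core:
  assumes n3: "3 \<le> n" and g1: "goodAB n a1 b1" and g2: "goodAB n a2 b2"
    and eq: "PhiAB n a1 b1 = PhiAB n a2 b2"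
  shows "a1 = a2 \<and> b1 = b2"
proof -
  note f1 = goodAB_facts[OF g1] and f2 = goodAB_facts[OF g2]
  note s1 = shape[OF g1 n3] and s2 = shape[OF g2 n3]
  let ?g = "gg n"
  let ?s = "PhiAB n a2 b2"
  have gt1: "\<And>x xs. set xs \<subseteq> D1 n \<Longrightarrow> x \<in> set (map ?g xs) \<Longrightarrow> 1 < x"
  proof -
    fix x xs assume "set xs \<subseteq> D1 n" "x \<in> set (map ?g xs)"
    then have "x \<in> D2 n" using gg_D[OF n3] by auto
    then show "1 < x" by (rule D2_gt1)
  qed
  have cat: "a1 @ b1 = a2 @ b2" if "map ?g a1 @ map ?g b1 = map ?g a2 @ map ?g b2"
  proof -
    have "map ?g (a1 @ b1) = map ?g (a2 @ b2)" using that by simp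
    moreover have "set (a1 @ b1) \<subseteq> D1 n" "set (a2 @ b2) \<subseteq> D1 n" using f1(6,7) f2(6,7) by auto
    ultimately show ?thesis using map_inj_D1[OF n3] by blast
  qed
  have S1: "b2 \<noteq> [] \<and> 1 \<le> hgt a2" if "hd ?s \<noteq> 1" "last ?s \<noteq> 1"
  proof -
    have "b2 \<noteq> []" using s2(2) that(1) by blast
    moreover have "1 \<le> hgt a2"
    proof (rule ccontr)
      assume "\<not> 1 \<le> hgt a2"
      then show False using s2(3) s2(4) that \<open>b2 \<noteq> []\<close> by blast
    qed
    ultimately show ?thesis by simp
  qed
  consider (c1) "b1 \<noteq> [] \<and> 1 \<le> hgt a1" | (c2) "b1 = []"
    | (c3) "b1 \<noteq> [] \<and> \<not> 1 \<le> hgt a1 \<and> hd b1 < last a1"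
    | (c4) "b1 \<noteq> [] \<and> \<not> 1 \<le> hgt a1 \<and> \<not> hd b1 < last a1" by blast
  then show ?thesis
  proof cases
    case c1
    have "hd ?s \<noteq> 1" "last ?s \<noteq> 1" using s1(1)[OF c1] eq by simp_all
    then have c1': "b2 \<noteq> [] \<and> 1 \<le> hgt a2" by (rule S1)
    then have "map ?g a1 @ 1 # map ?g b1 = map ?g a2 @ 1 # map ?g b2"
      using eq c1 unfolding PhiAB_def by simp
    moreover have "1 \<notin> set (map ?g a1)" using gt1[OF f1(6), of 1] by auto
    moreover have "1 \<notin> set (map ?g a2)" using gt1[OF f2(6), of 1] by auto
    ultimately have "map ?g a1 = map ?g a2 \<and> map ?g b1 = map ?g b2" by (rule app_unique)
    then show ?thesis using map_inj_D1[OF n3] f1(6,7) f2(6,7) by blast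
  next
    case c2
    have h: "hd ?s = 1 \<and> pb 0 (tl ?s)" using s1(2)[OF c2] eq by simp
    have "b2 = []"
    proof (rule ccontr)
      assume "b2 \<noteq> []"
      then show False using h s2(1) s2(3) s2(4) by blast
    qed
    then have "map ?g a1 = map ?g a2" using eq c2 unfolding PhiAB_def by simp
    then show ?thesis using map_inj_D1[OF n3] f1(6) f2(6) c2 \<open>b2 = []\<close> by blast
  next
    case c3
    have h: "hd ?s = 1 \<and> \<not> pb 0 (tl ?s)" using s1(3)[OF c3] eq by simp
    have c3': "b2 \<noteq> [] \<and> \<not> 1 \<le> hgt a2 \<and> hd b2 < last a2"
    proof -
      have "b2 \<noteq> []" using h s2(2) by blast
      moreover have "\<not> 1 \<le> hgt a2" using h s2(1) \<open>b2 \<noteq> []\<close> by blast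
      moreover have "hd b2 < last a2" using h s2(4) \<open>b2 \<noteq> []\<close> \<open>\<not> 1 \<le> hgt a2\<close> by blast
      ultimately show ?thesis by simp
    qed
    have "map ?g a1 @ map ?g b1 = map ?g a2 @ map ?g b2"
      using eq c3 c3' unfolding PhiAB_def by simp
    then have e: "a1 @ b1 = a2 @ b2" by (rule cat)
    have h1: "hgt a1 = 0" "hgt a2 = 0" using c3 c3' f1(2) f2(2) by auto
    have "\<not> length a1 < length a2"
    proof
      assume "length a1 < length a2"
      from uniq_down[OF e f1(5) _ h1(1) _ f2(1) this] c3 show False by blast
    qed
    moreover have "\<not> length a2 < length a1"
    proof
      assume "length a2 < length a1"
      from uniq_down[OF e[symmetric] f2(5) _ h1(2) _ f1(1) this] c3' show False by blast
    qed
    ultimately have "length a1 = length a2" by simp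
    then show ?thesis using e by simp
  next
    case c4
    have h: "hd ?s \<noteq> 1 \<and> last ?s = 1" using s1(4)[OF c4] eq by simp
    have c4': "b2 \<noteq> [] \<and> \<not> 1 \<le> hgt a2 \<and> \<not> hd b2 < last a2"
    proof -
      have "b2 \<noteq> []" using h s2(2) by blast
      moreover have "\<not> 1 \<le> hgt a2" using h s2(1) \<open>b2 \<noteq> []\<close> by blast
      moreover have "\<not> hd b2 < last a2" using h s2(3) \<open>b2 \<noteq> []\<close> \<open>\<not> 1 \<le> hgt a2\<close> by blast
      ultimately show ?thesis by simp
    qed
    have "(map ?g a1 @ map ?g b1) @ [1] = (map ?g a2 @ map ?g b2) @ [1]"
      using eq c4 c4' unfolding PhiAB_def by simp
    then have e: "a1 @ b1 = a2 @ b2" using cat by simp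
    have h1: "hgt a1 = 0" "hgt a2 = 0" using c4 c4' f1(2) f2(2) by auto
    have up1: "last a1 < hd b1"
    proof -
      have "last a1 \<in> set a1" "hd b1 \<in> set b1" using f1(5) c4 by auto
      then have "hd b1 \<noteq> last a1" using f1(4) by auto
      then show ?thesis using c4 by simp
    qed
    have up2: "last a2 < hd b2"
    proof -
      have "last a2 \<in> set a2" "hd b2 \<in> set b2" using f2(5) c4' by auto
      then have "hd b2 \<noteq> last a2" using f2(4) by auto
      then show ?thesis using c4' by simp
    qed
    have p1: "pb 0 b1" "pb 0 b2" using f1(3) f2(3) c4 c4' h1 by auto
    have "\<not> length a1 < length a2"
    proof
      assume "length a1 < length a2"
      from uniq_up[OF e f1(5) _ h1(1) up1 p1(1) h1(2) this] c4 show False by blast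
    qed
    moreover have "\<not> length a2 < length a1"
    proof
      assume "length a2 < length a1"
      from uniq_up[OF e[symmetric] f2(5) _ h1(2) up2 p1(2) h1(1) this] c4' show False by blast
    qed
    ultimately have "length a1 = length a2" by simp
    then show ?thesis using e by simp
  qed
qed

lemma first_hit:
  "pb 1 r \<Longrightarrow> \<not> pb 0 r \<Longrightarrow> \<exists>r1 r2. r = r1 @ r2 \<and> r1 \<noteq> [] \<and> r2 \<noteq> [] \<and> pb 0 r1 \<and> hgt r1 = 0
      \<and> hd r2 < last r1 \<and> pb 0 r2"
proof (induction r rule: rev_induct)
  case Nil then show ?case by simp
next
  case (snoc x r')
  show ?case
  proof (cases "pb 0 r'")
    case False
    have "pb 1 r'" using snoc.prems(1) pb_prefix by blast
    then obtain r1 r2 where R: "r' = r1 @ r2" "r1 \<noteq> []" "r2 \<noteq> []" "pb 0 r1" "hgt r1 = 0" "hd r2 < last r1"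
      using snoc.IH False by blast
    have e: "r' @ [x] = r1 @ (r2 @ [x])" using R by simp
    have "pb 1 (r1 @ (r2 @ [x]))" using snoc.prems(1) e by simp
    then have "pb (1 + hgt r1 + st (last r1) (hd (r2 @ [x]))) (r2 @ [x])" using R(2) pb_cat by blast
    moreover have "st (last r1) (hd (r2 @ [x])) = -1" using R(3,6) st_down by simp
    ultimately have "pb 0 (r2 @ [x])" using R(5) by simp
    then show ?thesis using e R by (intro exI[of _ r1] exI[of _ "r2 @ [x]"]) simp
  next
    case True
    have ne: "r' \<noteq> []" using snoc.prems(2) by (cases r') auto
    have h0: "0 \<le> hgt r'" using pb_hgt[OF True ne] by simp
    have "\<not> (0 \<le> 0 + hgt r' + st (last r') x)" using snoc.prems(2) True pb_snoc[OF ne] by blast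
    then have "hgt r' = 0" "st (last r') x = -1" using h0 st_bounds(1)[of "last r'" x] by linarith+
    then have "x < last r'" unfolding st_def by (auto split: if_splits)
    then show ?thesis using True ne \<open>hgt r' = 0\<close>
      by (intro exI[of _ r'] exI[of _ "[x]"]) simp
  qed
qed

lemma last_zero:
  "pb 0 t \<Longrightarrow> t \<noteq> [] \<Longrightarrow> 1 \<le> hgt t \<Longrightarrow> \<exists>a b. t = a @ b \<and> a \<noteq> [] \<and> b \<noteq> [] \<and> pb 0 a \<and> hgt a = 0
      \<and> last a < hd b \<and> pb 0 b"
proof (induction t rule: rev_induct)
  case Nil then show ?case by simp
next
  case (snoc x t')
  show ?case
  proof (cases "t' = []")
    case True then show ?thesis using snoc.prems(3) by simp
  next
    case ne: False
    have p': "pb 0 t'" using snoc.prems(1) pb_prefix by blast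
    have h0: "0 \<le> hgt t'" using pb_hgt[OF p' ne] by simp
    have ht: "hgt (t' @ [x]) = hgt t' + st (last t') x" using hgt_snoc[OF ne] .
    show ?thesis
    proof (cases "hgt t' = 0")
      case True
      then have "st (last t') x = 1" using ht snoc.prems(3) st_bounds(2)[of "last t'" x] by linarith
      then have "last t' < x" unfolding st_def by (auto split: if_splits)
      then show ?thesis using p' ne True by (intro exI[of _ t'] exI[of _ "[x]"]) simp
    next
      case False
      then obtain a b where R: "t' = a @ b" "a \<noteq> []" "b \<noteq> []" "pb 0 a" "hgt a = 0" "last a < hd b" "pb 0 b"
        using snoc.IH p' ne h0 by fastforce
      have "hgt t' = hgt a + st (last a) (hd b) + hgt b" using hgt_cat[OF R(2,3)] R(1) by simp
      then have "hgt t' = 1 + hgt b" using R(5,6) st_up by simp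
      moreover have "last t' = last b" using R(1,3) by simp
      ultimately have "0 \<le> 0 + hgt b + st (last b) x" using ht snoc.prems(3) by simp
      then have "pb 0 (b @ [x])" using pb_snoc[OF R(3)] R(7) by blast
      then show ?thesis using R by (intro exI[of _ a] exI[of _ "b @ [x]"]) simp
    qed
  qed
qed

lemma adj_lemma:
  assumes "distinct (X @ Y)" "has_factor3 X p m q \<or> has_factor3 Y p m q" "p \<noteq> m"
  shows "X \<noteq> [] \<Longrightarrow> last X \<noteq> m" and "Y \<noteq> [] \<Longrightarrow> hd Y \<noteq> m"
proof -
  show "X \<noteq> [] \<Longrightarrow> last X \<noteq> m"
  proof
    assume ne: "X \<noteq> []" and l: "last X = m"
    from assms(2) show False
    proof
      assume "has_factor3 X p m q"
      then obtain L R where a: "X = L @ p # m # q # R" unfolding fac_iff by blast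
      have "last X = last (q # R)" unfolding a by simp
      then have "last X \<in> set (q # R)" using last_in_set by (metis list.distinct(1))
      moreover have "m \<notin> set (q # R)" using assms(1) a by auto
      ultimately show False using l by simp
    next
      assume "has_factor3 Y p m q"
      then have "m \<in> set Y" unfolding fac_iff by auto
      moreover have "m \<in> set X" using l ne last_in_set by metis
      ultimately show False using assms(1) by auto
    qed
  qed
  show "Y \<noteq> [] \<Longrightarrow> hd Y \<noteq> m"
  proof
    assume ne: "Y \<noteq> []" and l: "hd Y = m"
    from assms(2) show False
    proof
      assume "has_factor3 Y p m q"
      then obtain L R where bb: "Y = L @ p # m # q # R" unfolding fac_iff by blast
      show False
      proof (cases L)
        case Nil then show ?thesis using l bb assms(3) by auto
      next
        case (Cons l1 L1)
        then have "m \<in> set L" using l bb by auto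
        then show False using assms(1) bb by auto
      qed
    next
      assume "has_factor3 X p m q"
      then have "m \<in> set X" unfolding fac_iff by auto
      moreover have "m \<in> set Y" using l ne hd_in_set by metis
      ultimately show False using assms(1) by auto
    qed
  qed
qed

lemma perm_bwd:
  assumes "distinct (X @ Y)" "set X \<union> set Y = D2 n" "3 \<le> n"
  shows "is_perm n (map (hh n) X @ (n-1) # map (hh n) Y)"
proof -
  have "inj_on (hh n) (set (X @ Y))" using inj_hh[OF assms(3)] assms(2) by simp
  then have D: "distinct (map (hh n) (X @ Y))" using assms(1) distinct_map by blast
  have S: "set (map (hh n) (X @ Y)) = D1 n" using hh_img[OF assms(3)] assms(2) by (metis list.set_map set_append)
  have n1: "n - 1 \<notin> D1 n" unfolding D1_def by simp
  have one: "n - 1 \<in> {1..n}" using assms(3) by simp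
  have s: "insert (n-1) (D1 n) = {1..n}" unfolding D1_def using insert_Diff[OF one] by simp
  show ?thesis unfolding is_perm_def
  proof
    show "distinct (map (hh n) X @ (n-1) # map (hh n) Y)" using D S n1 by auto
    have "set (map (hh n) X @ (n-1) # map (hh n) Y) = insert (n-1) (set (map (hh n) (X @ Y)))" by auto
    then show "set (map (hh n) X @ (n-1) # map (hh n) Y) = {1..n}" using S s by simp
  qed
qed

lemma gh_map: "3 \<le> n \<Longrightarrow> set X \<subseteq> D2 n \<Longrightarrow> map (gg n) (map (hh n) X) = X"
proof (induction X)
  case (Cons x X) then show ?case using hh_D[of n x] by simp
qed simp

lemma build_good:
  assumes n3: "3 \<le> n" and ij: "i \<in> {1..n-2}" "j \<in> {1..n-2}"
    and d: "distinct (X @ Y)" and s: "set X \<union> set Y = D2 n" and ne: "X \<noteq> []"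
    and F: "has_factor3 X (i+1) n (j+1) \<or> has_factor3 Y (i+1) n (j+1)"
    and pX: "pb 0 X" and pY: "Y \<noteq> [] \<Longrightarrow> pb (hgt X) Y"
  shows "goodAB n (map (hh n) X) (map (hh n) Y)"
    "has_factor3 (map (hh n) X) i n j \<or> has_factor3 (map (hh n) Y) i n j"
    "hgt (map (hh n) X) = hgt X"
    "Y \<noteq> [] \<Longrightarrow> (hd (map (hh n) Y) < last (map (hh n) X)) = (hd Y < last X)"
    "map (gg n) (map (hh n) X) = X" "map (gg n) (map (hh n) Y) = Y"
proof -
  let ?h = "hh n"
  have sm: "smono ?h (D2 n)" using smono_hh[OF n3] .
  have sX: "set X \<subseteq> D2 n" and sY: "set Y \<subseteq> D2 n" using s by auto
  show "map (gg n) (map ?h X) = X" "map (gg n) (map ?h Y) = Y" using gh_map[OF n3] sX sY by auto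
  show hX: "hgt (map ?h X) = hgt X" using hgt_map[OF sm sX] .
  have lX: "last X \<in> D2 n" using sX ne last_in_set by blast
  show "Y \<noteq> [] \<Longrightarrow> (hd (map ?h Y) < last (map ?h X)) = (hd Y < last X)"
  proof -
    assume Yne: "Y \<noteq> []"
    have "hd Y \<in> D2 n" using sY Yne hd_in_set by blast
    then show ?thesis using lt_map[OF sm _ lX] ne Yne by (simp add: hd_map last_map)
  qed
  have pn: "i + 1 \<noteq> n" using ij n3 by auto
  have ln: "last X \<noteq> n" using adj_lemma(1)[OF d F pn] ne .
  have hn: "Y \<noteq> [] \<Longrightarrow> hd Y \<noteq> n" using adj_lemma(2)[OF d F pn] .
  show "has_factor3 (map ?h X) i n j \<or> has_factor3 (map ?h Y) i n j"
    using F fac_map[of _ "i+1" n "j+1" ?h] hh_val(1)[OF ij(1)] hh_val(1)[OF ij(2)] hh_val(2) by metis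
  have ga: "map ?h X \<noteq> []" using ne by simp
  have sa: "set (map ?h X) \<subseteq> D1 n" using hh_D[OF n3] sX by auto
  have sb: "set (map ?h Y) \<subseteq> D1 n" using hh_D[OF n3] sY by auto
  have la: "last (map ?h X) < n - 1"
  proof -
    have "last (map ?h X) = last X - 1" using ne ln by (simp add: last_map hh_def)
    moreover have "last X \<le> n" "1 < last X" using lX unfolding D2_def by auto
    ultimately show ?thesis using ln by simp
  qed
  have hb: "map ?h Y \<noteq> [] \<longrightarrow> hd (map ?h Y) < n - 1"
  proof
    assume "map ?h Y \<noteq> []"
    then have Yne: "Y \<noteq> []" by simp
    have "hd Y \<in> D2 n" using sY Yne hd_in_set by blast
    moreover have "hd (map ?h Y) = hd Y - 1" using Yne hn by (simp add: hd_map hh_def)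
    ultimately show "hd (map ?h Y) < n - 1" using hn Yne unfolding D2_def by auto
  qed
  have P: "is_perm n (map ?h X @ (n-1) # map ?h Y)" using perm_bwd[OF d s n3] .
  have pa: "pb 0 (map ?h X)" using pb_map[OF sm sX] pX by simp
  have h0: "0 \<le> hgt X" using pb_hgt[OF pX ne] by simp
  have pbb: "map ?h Y \<noteq> [] \<longrightarrow> pb (0 + hgt (map ?h X)) (map ?h Y)"
    using pY pb_map[OF sm sY] hX by simp
  have "pb 0 (map ?h X @ (n-1) # map ?h Y)"
    using peak_facts(1)[OF ga la, of "map ?h Y" 0] hb pa pbb hX h0 by simp
  then show "goodAB n (map ?h X) (map ?h Y)"
    unfolding goodAB_def using ga sa sb la hb P by simp
qed

lemma fac_Nil: "\<not> has_factor3 [] a b c" by (simp add: has_factor3_def)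

lemma surj_core:
  assumes n3: "3 \<le> n" and ij: "i \<in> {1..n-2}" "j \<in> {1..n-2}"
    and P: "is_perm n s" and B: "pb 0 s" and F: "has_factor3 s (i+1) n (j+1)"
  shows "\<exists>a b. goodAB n a b \<and> (has_factor3 a i n j \<or> has_factor3 b i n j) \<and> PhiAB n a b = s"
proof -
  let ?h = "hh n" and ?g = "gg n"
  have "1 \<in> set s" using P n3 unfolding is_perm_def by auto
  then obtain c e where s: "s = c @ 1 # e" by (meson split_list)
  have dist: "distinct s" and ss: "set s = {1..n}" using P unfolding is_perm_def by auto
  have d: "distinct (c @ e)" using dist s by simp
  have n1: "1 \<notin> set c" "1 \<notin> set e" using dist s by auto
  have sce: "set c \<union> set e = D2 n" using ss s n1 unfolding D2_def by auto
  have gt1: "\<And>x. x \<in> set c \<union> set e \<Longrightarrow> 1 < x" using sce D2_gt1 by blast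
  have len: "length s = n" using perm_len[OF P] .
  have ni: "1 \<noteq> i + 1" "1 \<noteq> j + 1" "1 \<noteq> n" using ij n3 by auto
  have fce: "has_factor3 c (i+1) n (j+1) \<or> has_factor3 e (i+1) n (j+1)"
  proof -
    have hf: "has_factor3 (c @ (1 # e)) (i+1) n (j+1)" using F s by simp
    from fac_append_cases[OF hf] show ?thesis using ni fac_Cons_inv[of 1 e "i+1" n "j+1"] by auto
  qed
  have ilt: "i + 1 < n" using ij n3 by auto
  consider (both) "c \<noteq> [] \<and> e \<noteq> []" | (c0) "c = []" | (e0) "c \<noteq> [] \<and> e = []" by blast
  then show ?thesis
  proof cases
    case both
    then have cne: "c \<noteq> []" and ene: "e \<noteq> []" by auto
    have lc: "1 < last c" using gt1 cne last_in_set by blast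
    have he: "1 < hd e" using gt1 ene hd_in_set by blast
    have "pb 0 (c @ (1 # e)) \<longleftrightarrow> pb 0 c \<and> pb (0 + hgt c + st (last c) 1) (1 # e)"
      using pb_cat[OF cne] by simp
    then have "pb 0 c" "pb (hgt c - 1) (1 # e)" using B s lc st_down by auto
    then have pc: "pb 0 c" and hc: "1 \<le> hgt c" and pe: "pb (hgt c) e"
      using pb_Cons_ne[OF ene] he st_up by auto
    note G = build_good[OF n3 ij d sce cne fce pc, OF pe]
    show ?thesis
    proof (intro exI conjI)
      show "goodAB n (map ?h c) (map ?h e)" using G(1) .
      show "has_factor3 (map ?h c) i n j \<or> has_factor3 (map ?h e) i n j" using G(2) .
      show "PhiAB n (map ?h c) (map ?h e) = s" unfolding PhiAB_def using G(3,5,6) ene hc s by simp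
    qed
  next
    case c0
    then have ene: "e \<noteq> []" using len s n3 by auto
    have he: "1 < hd e" using gt1 ene hd_in_set by blast
    have fe: "has_factor3 e (i+1) n (j+1)" using fce c0 fac_Nil by blast
    have pe1: "pb 1 e" using B s c0 pb_Cons_ne[OF ene] st_up[OF he] by simp
    show ?thesis
    proof (cases "pb 0 e")
      case True
      note G = build_good[OF n3 ij, of e "[]"] 
      have G': "goodAB n (map ?h e) (map ?h [])" "has_factor3 (map ?h e) i n j \<or> has_factor3 (map ?h []) i n j"
        "map ?g (map ?h e) = e"
        using G d sce c0 ene fe True by auto
      show ?thesis
      proof (intro exI conjI)
        show "goodAB n (map ?h e) []" using G'(1) by simp
        show "has_factor3 (map ?h e) i n j \<or> has_factor3 [] i n j" using G'(2) by simp
        show "PhiAB n (map ?h e) [] = s" unfolding PhiAB_def using G'(3) s c0 by simp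
      qed
    next
      case False
      obtain r1 r2 where R: "e = r1 @ r2" "r1 \<noteq> []" "r2 \<noteq> []" "pb 0 r1" "hgt r1 = 0"
        "hd r2 < last r1" "pb 0 r2" using first_hit[OF pe1 False] by blast
      have fr: "has_factor3 r1 (i+1) n (j+1) \<or> has_factor3 r2 (i+1) n (j+1)"
      proof -
        have "has_factor3 (r1 @ r2) (i+1) n (j+1)" using fe R(1) by simp
        from fac_append_cases[OF this] show ?thesis
        proof (elim disjE exE conjE)
          fix L R' assume "r1 = L @ [i+1]" "r2 = n # (j+1) # R'"
          then show ?thesis using R(6) ilt by simp
        next
          fix L R' assume r1: "r1 = L @ [i+1, n]" and "r2 = (j+1) # R'"
          have "pb 0 (L @ [i+1])" using R(4) r1 pb_prefix[of 0 "L @ [i+1]" "[n]"] by simp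
          then have "0 \<le> hgt (L @ [i+1])" using pb_hgt[of 0 "L @ [i+1]"] by simp
          moreover have "hgt r1 = hgt (L @ [i+1]) + st (i+1) n" unfolding r1
            using hgt_snoc[of "L @ [i+1]" n] by simp
          ultimately show ?thesis using R(5) st_up[OF ilt] by simp
        qed auto
      qed
      have d2: "distinct (r1 @ r2)" "set r1 \<union> set r2 = D2 n" using d sce c0 R(1) by auto
      note G = build_good[OF n3 ij d2 R(2) fr R(4)]
      have G1: "goodAB n (map ?h r1) (map ?h r2)" using G(1) R(7) R(5) by simp
      have G2: "has_factor3 (map ?h r1) i n j \<or> has_factor3 (map ?h r2) i n j" using G(2) R(7) R(5) by simp
      have G3: "hgt (map ?h r1) = 0" using G(3) R(5) R(7) by simp
      have G4: "hd (map ?h r2) < last (map ?h r1)" using G(4) R(2,3,5,6,7) by simp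
      have G5: "map ?g (map ?h r1) = r1" "map ?g (map ?h r2) = r2" using G(5,6) R(5,7) by auto
      show ?thesis
      proof (intro exI conjI)
        show "goodAB n (map ?h r1) (map ?h r2)" using G1 .
        show "has_factor3 (map ?h r1) i n j \<or> has_factor3 (map ?h r2) i n j" using G2 .
        show "PhiAB n (map ?h r1) (map ?h r2) = s" unfolding PhiAB_def
          using G3 G4 G5 R(1,3) s c0 by simp
      qed
    qed
  next
    case e0
    then have cne: "c \<noteq> []" by simp
    have lc: "1 < last c" using gt1 cne last_in_set by blast
    have fc: "has_factor3 c (i+1) n (j+1)" using fce e0 fac_Nil by blast
    have "pb 0 (c @ [1]) \<longleftrightarrow> pb 0 c \<and> 0 \<le> 0 + hgt c + st (last c) 1" using pb_snoc[OF cne] .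
    then have pc: "pb 0 c" and hc: "1 \<le> hgt c" using B s e0 st_down[OF lc] by auto
    obtain a b where R: "c = a @ b" "a \<noteq> []" "b \<noteq> []" "pb 0 a" "hgt a = 0"
        "last a < hd b" "pb 0 b" using last_zero[OF pc cne hc] by blast
    have fr: "has_factor3 a (i+1) n (j+1) \<or> has_factor3 b (i+1) n (j+1)"
    proof -
      have "has_factor3 (a @ b) (i+1) n (j+1)" using fc R(1) by simp
      from fac_append_cases[OF this] show ?thesis
      proof (elim disjE exE conjE)
        fix L R' assume "b = n # (j+1) # R'"
        have "pb (-1) ((j+1) # R')" using R(7) \<open>b = n # (j+1) # R'\<close> st_down[of "j+1" n] ij n3 by auto
        then show ?thesis using pb_cons_ge0 by fastforce
      next
        fix L R' assume "a = L @ [i+1, n]" "b = (j+1) # R'"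
        then show ?thesis using R(6) ij n3 by auto
      qed auto
    qed
    have d2: "distinct (a @ b)" "set a \<union> set b = D2 n" using d sce e0 R(1) by auto
    note G = build_good[OF n3 ij d2 R(2) fr R(4)]
    have G1: "goodAB n (map ?h a) (map ?h b)" using G(1) R(7) R(5) by simp
    have G2: "has_factor3 (map ?h a) i n j \<or> has_factor3 (map ?h b) i n j" using G(2) R(7) R(5) by simp
    have G3: "hgt (map ?h a) = 0" using G(3) R(5) R(7) by simp
    have G4: "\<not> hd (map ?h b) < last (map ?h a)" using G(4) R(2,3,5,6,7) by simp
    have G5: "map ?g (map ?h a) = a" "map ?g (map ?h b) = b" using G(5,6) R(5,7) by auto
    show ?thesis
    proof (intro exI conjI)
      show "goodAB n (map ?h a) (map ?h b)" using G1 .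
      show "has_factor3 (map ?h a) i n j \<or> has_factor3 (map ?h b) i n j" using G2 .
      show "PhiAB n (map ?h a) (map ?h b) = s" unfolding PhiAB_def
        using G3 G4 G5 R(1,3) s e0 by simp
    qed
  qed
qed

definition Phi :: "nat \<Rightarrow> nat list \<Rightarrow> nat list" where
  "Phi n w = PhiAB n (takeWhile (\<lambda>x. x \<noteq> n - 1) w) (tl (dropWhile (\<lambda>x. x \<noteq> n - 1) w))"

lemma Phi_eq: "n - 1 \<notin> set a \<Longrightarrow> Phi n (a @ (n-1) # b) = PhiAB n a b"
  unfolding Phi_def by (simp add: takeWhile_append dropWhile_append)

lemma D1_notin: "set a \<subseteq> D1 n \<Longrightarrow> n - 1 \<notin> set a" unfolding D1_def by auto

lemma fwd_good:
  assumes n3: "3 \<le> n" and ij: "i \<in> {1..n-2}" "j \<in> {1..n-2}" and g: "goodAB n a b"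
    and F: "has_factor3 a i n j \<or> has_factor3 b i n j"
  shows "is_perm n (PhiAB n a b) \<and> pb 0 (PhiAB n a b) \<and> dn (PhiAB n a b) = dn (a @ (n-1) # b)
         \<and> has_factor3 (PhiAB n a b) (i+1) n (j+1)"
  using g unfolding goodAB_def
  by (intro fwd[OF n3 ij refl _ _ _ _ _ F]) auto

lemma main_bij:
  assumes n3: "3 \<le> n" and ij: "i \<in> {1..n-2}" "j \<in> {1..n-2}"
  shows "bij_betw (Phi n) {w \<in> ballot_perms n d. has_factor3 w i n j}
                          {w \<in> ballot_perms n d. has_factor3 w (i+1) n (j+1)}"
proof -
  let ?A = "{w \<in> ballot_perms n d. has_factor3 w i n j}"
  let ?B = "{w \<in> ballot_perms n d. has_factor3 w (i+1) n (j+1)}"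
  have memA: "w \<in> ?A \<longleftrightarrow> is_perm n w \<and> pb 0 w \<and> int (dn w) = d \<and> has_factor3 w i n j" for w
    unfolding ballot_perms_def by (auto simp: ballot_pb descents_dn)
  have memB: "w \<in> ?B \<longleftrightarrow> is_perm n w \<and> pb 0 w \<and> int (dn w) = d \<and> has_factor3 w (i+1) n (j+1)" for w
    unfolding ballot_perms_def by (auto simp: ballot_pb descents_dn)
  have dec: "\<exists>a b. w = a @ (n-1) # b \<and> goodAB n a b \<and> (has_factor3 a i n j \<or> has_factor3 b i n j)"
    if "w \<in> ?A" for w
  proof -
    have P: "is_perm n w" and B: "pb 0 w" and F: "has_factor3 w i n j" using that memA by auto
    obtain a b where "w = a @ (n-1) # b" "a \<noteq> []" "set a \<subseteq> D1 n" "set b \<subseteq> D1 n"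
      "last a < n - 1" "b \<noteq> [] \<Longrightarrow> hd b < n - 1" "has_factor3 a i n j \<or> has_factor3 b i n j"
      using decompA[OF n3 ij P B F] by blast
    then show ?thesis using P B unfolding goodAB_def by blast
  qed
  show ?thesis unfolding bij_betw_def
  proof (intro conjI)
    show "inj_on (Phi n) ?A"
    proof (rule inj_onI)
      fix w1 w2 assume w1: "w1 \<in> ?A" and w2: "w2 \<in> ?A" and eq: "Phi n w1 = Phi n w2"
      obtain a1 b1 where D1': "w1 = a1 @ (n-1) # b1" "goodAB n a1 b1" using dec[OF w1] by blast
      obtain a2 b2 where D2': "w2 = a2 @ (n-1) # b2" "goodAB n a2 b2" using dec[OF w2] by blast
      have "PhiAB n a1 b1 = PhiAB n a2 b2"
        using eq D1' D2' Phi_eq D1_notin goodAB_facts(6) by metis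
      then have "a1 = a2 \<and> b1 = b2" using inj_core[OF n3 D1'(2) D2'(2)] by blast
      then show "w1 = w2" using D1' D2' by simp
    qed
    show "Phi n ` ?A = ?B"
    proof
      show "Phi n ` ?A \<subseteq> ?B"
      proof
        fix s assume "s \<in> Phi n ` ?A"
        then obtain w where w: "w \<in> ?A" "s = Phi n w" by blast
        obtain a b where D: "w = a @ (n-1) # b" "goodAB n a b" "has_factor3 a i n j \<or> has_factor3 b i n j"
          using dec[OF w(1)] by blast
        have s: "s = PhiAB n a b" using w(2) D Phi_eq D1_notin goodAB_facts(6) by metis
        have "int (dn w) = d" using w(1) memA by blast
        then show "s \<in> ?B" using fwd_good[OF n3 ij D(2,3)] s D(1) memB by simp
      qed
      show "?B \<subseteq> Phi n ` ?A"
      proof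
        fix s assume s: "s \<in> ?B"
        have P: "is_perm n s" and B: "pb 0 s" and F: "has_factor3 s (i+1) n (j+1)" and dd: "int (dn s) = d"
          using s memB by auto
        obtain a b where G: "goodAB n a b" "has_factor3 a i n j \<or> has_factor3 b i n j" "PhiAB n a b = s"
          using surj_core[OF n3 ij P B F] by blast
        let ?w = "a @ (n-1) # b"
        have fw: "dn (PhiAB n a b) = dn ?w" using fwd_good[OF n3 ij G(1,2)] by simp
        have fac: "has_factor3 ?w i n j" using G(2)
          by (auto intro: fac_appendL fac_appendR fac_Cons)
        have "?w \<in> ?A" using G(1) fac fw G(3) dd memA unfolding goodAB_def by simp
        moreover have "Phi n ?w = s" using Phi_eq D1_notin goodAB_facts(6)[OF G(1)] G(3) by metis
        ultimately show "s \<in> Phi n ` ?A" by blast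
      qed
    qed
  qed
qed

theorem theorem3p1:
  fixes n :: nat and d :: int
  assumes "n \<ge> 2"
  shows "\<forall>i\<in>{1..n-2}. \<forall>j\<in>{1..n-2}. b_count n d (i+1) (j+1) = b_count n d i j"
proof (intro ballI)
  fix i j assume ij: "i \<in> {1..n-2}" "j \<in> {1..n-2}"
  then have n3: "3 \<le> n" by auto
  show "b_count n d (i+1) (j+1) = b_count n d i j"
    unfolding b_count_def using bij_betw_same_card[OF main_bij[OF n3 ij, of d]] by simp
qed

end
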